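(* Let $R$ be a finite commutative Frobenius ring of characteristic $2$, let $G=\langle x\rangle$ be a finite cyclic group of order $n$ with elements listed as $g_i=x^{i-1}$ ($i=1,\dots,n$), let $v_1\neq v_2$ be elements of $RG$, and let $A$ be an $n\times n$ reverse circulant matrix over $R$. Let $C_\sigma$ be the code over $R$ generated by $$M(\sigma)=\left(\, I_{2n} \;\middle|\; \begin{matrix} \sigma(v_1) & \sigma(v_2)+A\\ \sigma(v_2)+A & \sigma(v_1)\end{matrix}\,\right).$$ Then $C_\sigma$ is a self-dual code of length $4n$ if and only if $\sigma((v_1+v_2)(v_1+v_2)^* )+A^2=I_n$ and $v_1v_2^*=v_2v_1^*$.
   Context: For $v=\sum_{g\in G}\alpha_g g\in RG$, $\sigma(v)$ is the $n\times n$ matrix over $R$ whose $(i,j)$ entry is $\alpha_{g_i^{-1}g_j}$ (so for $v=\sum_{i=0}^{n-1}\alpha_i x^i$, $\sigma(v)$ is the circulant matrix with first row $(\alpha_0,\dots,\alpha_{n-1})$). The canonical involution is $v^*=\sum_g\alpha_g g^{-1}$. An $n\times n$ matrix $(a_{ij})$ is reverse circulant if $a_{ij}$ depends only on $(i+j)\bmod n$. The code generated by a matrix is the $R$-submodule spanned by its rows; it is self-dual if it equals its dual with respect to the Euclidean inner product $\langle x,y\rangle=\sum_i x_iy_i$. *)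

theory Defs
  imports Complex_Main "Jordan_Normal_Form.Matrix"
begin

(* Frobenius ring (finite commutative): existence of a generating character,
   i.e. an additive character chi : (R,+) -> C^* whose kernel contains no
   nonzero ideal (Wood's characterization, standard in coding theory). *)
definition is_ideal :: "'a::comm_ring_1 set \<Rightarrow> bool" where
  "is_ideal I \<longleftrightarrow> 0 \<in> I \<and> (\<forall>x\<in>I. \<forall>y\<in>I. x + y \<in> I) \<and> (\<forall>r. \<forall>x\<in>I. r * x \<in> I)"

definition generating_character :: "('a::comm_ring_1 \<Rightarrow> complex) \<Rightarrow> bool" where
  "generating_character chi \<longleftrightarrow>
     (\<forall>a b. chi (a + b) = chi a * chi b) \<and>
     (\<forall>I::'a set. is_ideal I \<longrightarrow> I \<noteq> {0} \<longrightarrow> (\<exists>x\<in>I. chi x \<noteq> 1))"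

definition frobenius_ring :: "'a::comm_ring_1 itself \<Rightarrow> bool" where
  "frobenius_ring _ \<longleftrightarrow> (\<exists>chi :: 'a \<Rightarrow> complex. generating_character chi)"

(* Group ring RG for G = <x> cyclic of order n; v = sum_i v$i x^i
   is represented by its coefficient vector of dimension n. *)
definition gr_mult :: "nat \<Rightarrow> 'a::comm_ring_1 vec \<Rightarrow> 'a vec \<Rightarrow> 'a vec" where
  "gr_mult n u v = vec n (\<lambda>k. \<Sum>i<n. \<Sum>j<n. if (i + j) mod n = k then u $ i * v $ j else 0)"

(* canonical involution v* = sum_g alpha_g g^{-1} *)
definition gr_star :: "nat \<Rightarrow> 'a vec \<Rightarrow> 'a vec" where
  "gr_star n v = vec n (\<lambda>i. v $ ((n - i) mod n))"

(* sigma(v): (i,j) entry alpha_{g_i^{-1} g_j} = alpha_{x^{(j-i) mod n}} (0-indexed) *)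
definition sigma_mat :: "nat \<Rightarrow> 'a vec \<Rightarrow> 'a mat" where
  "sigma_mat n v = mat n n (\<lambda>(i, j). v $ ((j + n - i) mod n))"

definition reverse_circulant :: "nat \<Rightarrow> 'a mat \<Rightarrow> bool" where
  "reverse_circulant n A \<longleftrightarrow> A \<in> carrier_mat n n \<and>
     (\<forall>i j k l. i < n \<longrightarrow> j < n \<longrightarrow> k < n \<longrightarrow> l < n \<longrightarrow>
        (i + j) mod n = (k + l) mod n \<longrightarrow> A $$ (i, j) = A $$ (k, l))"

definition hconcat :: "'a mat \<Rightarrow> 'a mat \<Rightarrow> 'a mat" where
  "hconcat A B = mat (dim_row A) (dim_col A + dim_col B)
     (\<lambda>(i, j). if j < dim_col A then A $$ (i, j) else B $$ (i, j - dim_col A))"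

definition code_gen :: "'a::comm_ring_1 mat \<Rightarrow> 'a vec set" where
  "code_gen M = {vec (dim_col M) (\<lambda>j. \<Sum>i<dim_row M. c i * M $$ (i, j)) | c. True}"

definition dual_code :: "nat \<Rightarrow> 'a::comm_ring_1 vec set \<Rightarrow> 'a vec set" where
  "dual_code N C = {x \<in> carrier_vec N. \<forall>y\<in>C. x \<bullet> y = 0}"

definition self_dual :: "nat \<Rightarrow> 'a::comm_ring_1 vec set \<Rightarrow> bool" where
  "self_dual N C \<longleftrightarrow> C \<subseteq> carrier_vec N \<and> C = dual_code N C"

definition M_sigma :: "nat \<Rightarrow> 'a::comm_ring_1 vec \<Rightarrow> 'a vec \<Rightarrow> 'a mat \<Rightarrow> 'a mat" where
  "M_sigma n v1 v2 A = hconcat (1\<^sub>m (2 * n))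
     (four_block_mat (sigma_mat n v1) (sigma_mat n v2 + A)
                     (sigma_mat n v2 + A) (sigma_mat n v1))"

end

theory Submission
  imports Defs "Jordan_Normal_Form.Determinant"
begin

definition cw :: "nat \<Rightarrow> 'a vec \<Rightarrow> int \<Rightarrow> 'a" where
  "cw n v t = v $ nat (t mod int n)"

lemma idx_conv: assumes "i < n" "j < (n::nat)"
  shows "(j + n - i) mod n = nat ((int j - int i) mod int n)"
proof -
  have "int ((j + n - i) mod n) = int (j + n - i) mod int n" by (simp add: zmod_int)
  also have "int (j + n - i) = (int j - int i) + int n" using assms by simp
  also have "((int j - int i) + int n) mod int n = (int j - int i) mod int n" by simp
  finally show ?thesis by (metis nat_int)
qed

lemma cw_cong: "a mod int n = b mod int n \<Longrightarrow> cw n v a = cw n v b"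
  unfolding cw_def by simp

lemma cw_nat: "k < n \<Longrightarrow> cw n v (int k) = v $ k"
  unfolding cw_def by (simp add: zmod_int)

lemma sigma_entry: "i < n \<Longrightarrow> j < n \<Longrightarrow> sigma_mat n v $$ (i,j) = cw n v (int j - int i)"
  unfolding sigma_mat_def cw_def using idx_conv by simp

lemma sigma_carrier[simp]: "sigma_mat n v \<in> carrier_mat n n"
  unfolding sigma_mat_def by simp

lemma sigma_dims[simp]: "dim_row (sigma_mat n v) = n" "dim_col (sigma_mat n v) = n"
  unfolding sigma_mat_def by simp_all

lemma sum_shift: assumes n: "n > 0"
  shows "(\<Sum>k<n. h (nat ((int k + c) mod int n))) = (\<Sum>k<n. (h k :: 'a::comm_monoid_add))"
proof -
  let ?f = "\<lambda>k. nat ((int k + c) mod int n)"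
  have inj: "inj_on ?f {..<n}"
  proof
    fix x y assume x: "x \<in> {..<n}" and y: "y \<in> {..<n}" and e: "?f x = ?f y"
    have "(int x + c) mod int n = (int y + c) mod int n" using e n
      by (simp add: nat_eq_iff2)
    hence "int x mod int n = int y mod int n"
      by (metis add_diff_cancel_right' mod_diff_left_eq)
    thus "x = y" using x y by (simp add: zmod_int)
  qed
  have sub: "?f ` {..<n} \<subseteq> {..<n}" using n
    by (auto simp: nat_less_iff)
  have "?f ` {..<n} = {..<n}"
    by (rule card_subset_eq[OF _ sub]) (auto simp: card_image[OF inj])
  then show ?thesis using sum.reindex[OF inj, of h] by simp
qed

lemma nat_mod_lt: "n > 0 \<Longrightarrow> nat (t mod int n) < n"
  by (simp add: nat_less_iff)

lemma int_nat_mod: "n > 0 \<Longrightarrow> int (nat (t mod int n)) = t mod int n"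
  by simp

lemma star_entry: assumes "i < n" shows "gr_star n v $ i = cw n v (- int i)"
proof -
  have "int ((n - i) mod n) = (- int i) mod int n"
    using assms by (simp add: zmod_int of_nat_diff)
  thus ?thesis using assms unfolding gr_star_def cw_def by (metis index_vec nat_int)
qed

lemma mult_inner: assumes "i < n" "k < n"
  shows "(\<Sum>j<n. if (i + j) mod n = k then u $ i * v $ j else 0) = u $ i * cw n v (int k - int i)"
proof -
  have n: "n > 0" using assms by auto
  let ?j0 = "nat ((int k - int i) mod int n)"
  have j0: "?j0 < n" using n by (rule nat_mod_lt)
  have iff: "((i + j) mod n = k) = (j = ?j0)" if j: "j < n" for j
  proof -
    have "((i + j) mod n = k) = (int ((i + j) mod n) = int k)" by (simp only: of_nat_eq_iff)
    also have "\<dots> = ((int i + int j) mod int n = int k mod int n)" using assms by (simp add: zmod_int)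
    also have "\<dots> = (int j mod int n = (int k - int i) mod int n)"
      by (simp add: mod_eq_dvd_iff algebra_simps)
    also have "\<dots> = (int j = (int k - int i) mod int n)" using j by simp
    also have "\<dots> = (j = ?j0)" using n by auto
    finally show ?thesis .
  qed
  have "(\<Sum>j<n. if (i + j) mod n = k then u $ i * v $ j else 0) = (\<Sum>j<n. if j = ?j0 then u $ i * v $ j else 0)"
    by (rule sum.cong) (auto simp: iff)
  also have "\<dots> = u $ i * v $ ?j0" using j0 by simp
  finally show ?thesis unfolding cw_def .
qed

lemma mult_entry: assumes "k < n"
  shows "gr_mult n u v $ k = (\<Sum>i<n. u $ i * cw n v (int k - int i))"
proof -
  have "gr_mult n u v $ k = (\<Sum>i<n. \<Sum>j<n. if (i + j) mod n = k then u $ i * v $ j else 0)"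
    unfolding gr_mult_def using assms by simp
  also have "\<dots> = (\<Sum>i<n. u $ i * cw n v (int k - int i))"
    by (rule sum.cong) (auto simp: mult_inner assms)
  finally show ?thesis .
qed

lemma sigma_add: assumes "u \<in> carrier_vec n" "v \<in> carrier_vec n"
  shows "sigma_mat n (u + v) = sigma_mat n u + sigma_mat n v"
  by (rule eq_matI) (use assms in \<open>auto simp: sigma_mat_def\<close>)

lemma sigma_mult: assumes n: "n > 0"
  shows "sigma_mat n (gr_mult n u v) = sigma_mat n u * sigma_mat n v"
proof (rule eq_matI)
  fix i j assume i: "i < dim_row (sigma_mat n u * sigma_mat n v)" and j: "j < dim_col (sigma_mat n u * sigma_mat n v)"
  hence i: "i < n" and j: "j < n" by auto
  let ?p = "nat ((int j - int i) mod int n)"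
  have ip: "int ?p = (int j - int i) mod int n" using n by simp
  have "sigma_mat n (gr_mult n u v) $$ (i,j) = gr_mult n u v $ ?p"
    using i j by (simp add: sigma_entry cw_def)
  also have "\<dots> = (\<Sum>m<n. u $ m * cw n v (int ?p - int m))" using nat_mod_lt[OF n] by (rule mult_entry)
  also have "\<dots> = (\<Sum>m<n. cw n u (int m) * cw n v (int j - int i - int m))"
  proof (rule sum.cong)
    fix m assume m: "m \<in> {..<n}"
    have "cw n v (int ?p - int m) = cw n v (int j - int i - int m)"
      by (rule cw_cong) (simp only: ip mod_diff_left_eq)
    thus "u $ m * cw n v (int ?p - int m) = cw n u (int m) * cw n v (int j - int i - int m)"
      using m by (simp add: cw_nat)
  qed simp
  also have "\<dots> = (\<Sum>m<n. (\<lambda>k. cw n u (int k - int i) * cw n v (int j - int k)) (nat ((int m + int i) mod int n)))"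
  proof (rule sum.cong)
    fix m assume m: "m \<in> {..<n}"
    have im: "int (nat ((int m + int i) mod int n)) = (int m + int i) mod int n" using n by simp
    have "cw n u (int m) = cw n u (int (nat ((int m + int i) mod int n)) - int i)"
      by (rule cw_cong) (simp only: im mod_diff_left_eq, simp)
    moreover have "cw n v (int j - int i - int m) = cw n v (int j - int (nat ((int m + int i) mod int n)))"
      by (rule cw_cong) (simp only: im mod_diff_right_eq, simp add: algebra_simps)
    ultimately show "cw n u (int m) * cw n v (int j - int i - int m) = (\<lambda>k. cw n u (int k - int i) * cw n v (int j - int k)) (nat ((int m + int i) mod int n))"
      by simp
  qed simp
  also have "\<dots> = (\<Sum>k<n. cw n u (int k - int i) * cw n v (int j - int k))" by (rule sum_shift[OF n])
  also have "\<dots> = (sigma_mat n u * sigma_mat n v) $$ (i,j)"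
    using i j by (simp add: scalar_prod_def sigma_entry lessThan_atLeast0)
  finally show "sigma_mat n (gr_mult n u v) $$ (i,j) = (sigma_mat n u * sigma_mat n v) $$ (i,j)" .
qed auto

lemma sigma_star: assumes n: "n > 0"
  shows "sigma_mat n (gr_star n v) = transpose_mat (sigma_mat n v)"
proof (rule eq_matI)
  fix i j assume "i < dim_row (transpose_mat (sigma_mat n v))" "j < dim_col (transpose_mat (sigma_mat n v))"
  hence i: "i < n" and j: "j < n" by auto
  have ip: "int (nat ((int j - int i) mod int n)) = (int j - int i) mod int n" using n by simp
  have "sigma_mat n (gr_star n v) $$ (i,j) = gr_star n v $ nat ((int j - int i) mod int n)"
    using i j by (simp add: sigma_entry cw_def)
  also have "\<dots> = cw n v (- int (nat ((int j - int i) mod int n)))"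
    by (rule star_entry[OF nat_mod_lt[OF n]])
  also have "\<dots> = cw n v (int i - int j)"
    by (rule cw_cong) (simp only: ip mod_minus_eq, simp)
  finally show "sigma_mat n (gr_star n v) $$ (i,j) = transpose_mat (sigma_mat n v) $$ (i,j)"
    using i j by (simp add: sigma_entry)
qed auto

lemma sigma_inj: assumes n: "n > 0" and "u \<in> carrier_vec n" "v \<in> carrier_vec n"
  and e: "sigma_mat n u = sigma_mat n v" shows "u = v"
proof (rule eq_vecI)
  fix j assume "j < dim_vec v" hence j: "j < n" using assms by simp
  have "sigma_mat n u $$ (0,j) = sigma_mat n v $$ (0,j)" using e by simp
  thus "u $ j = v $ j" using j n by (simp add: sigma_entry cw_nat)
qed (use assms in simp)

lemma rc_eq: assumes "reverse_circulant n A" "i < n" "j < n" "k < n" "l < n" "(i + j) mod n = (k + l) mod n"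
  shows "A $$ (i,j) = A $$ (k,l)"
  using assms unfolding reverse_circulant_def by blast

lemma rc_carrier: "reverse_circulant n A \<Longrightarrow> A \<in> carrier_mat n n"
  unfolding reverse_circulant_def by blast

lemma rc_sym: assumes A: "reverse_circulant n A" shows "transpose_mat A = A"
proof (rule eq_matI)
  have Ac: "A \<in> carrier_mat n n" using A by (rule rc_carrier)
  fix i j assume "i < dim_row A" "j < dim_col A"
  hence ij: "i < n" "j < n" using Ac by auto
  have "A $$ (j,i) = A $$ (i,j)" by (rule rc_eq[OF A ij(2) ij(1) ij]) (simp add: add.commute)
  thus "transpose_mat A $$ (i,j) = A $$ (i,j)" using ij Ac by simp
qed (use rc_carrier[OF assms] in auto)

lemma sigma_rc_comm: fixes s :: "'a::comm_ring_1 vec" assumes n: "n > 0" and A: "reverse_circulant n A"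
  shows "sigma_mat n s * A = A * transpose_mat (sigma_mat n s)"
proof (rule eq_matI)
  have Ac: "A \<in> carrier_mat n n" using A by (rule rc_carrier)
  fix i j assume "i < dim_row (A * transpose_mat (sigma_mat n s))" "j < dim_col (A * transpose_mat (sigma_mat n s))"
  hence i: "i < n" and j: "j < n" using Ac by auto
  let ?q = "\<lambda>m c. nat ((int m + int c) mod int n)"
  have qlt: "?q m c < n" for m c using n by (rule nat_mod_lt)
  have qi: "int (?q m c) = (int m + int c) mod int n" for m c using n by simp
  have "(sigma_mat n s * A) $$ (i,j) = (\<Sum>k<n. cw n s (int k - int i) * A $$ (k,j))"
    using i j Ac by (simp add: scalar_prod_def sigma_entry lessThan_atLeast0)
  also have "\<dots> = (\<Sum>m<n. (\<lambda>k. cw n s (int k - int i) * A $$ (k,j)) (?q m i))"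
    by (rule sum_shift[OF n, symmetric])
  also have "\<dots> = (\<Sum>m<n. (\<lambda>k. A $$ (i,k) * cw n s (int k - int j)) (?q m j))"
  proof (rule sum.cong)
    fix m assume m: "m \<in> {..<n}"
    have c1: "cw n s (int (?q m i) - int i) = cw n s (int m)"
      by (rule cw_cong) (simp only: qi mod_diff_left_eq, simp)
    have c2: "cw n s (int (?q m j) - int j) = cw n s (int m)"
      by (rule cw_cong) (simp only: qi mod_diff_left_eq, simp)
    have "int ((?q m i + j) mod n) = int ((i + ?q m j) mod n)"
      by (simp only: zmod_int of_nat_add qi mod_add_left_eq mod_add_right_eq) (simp add: algebra_simps)
    hence e: "(?q m i + j) mod n = (i + ?q m j) mod n" by (simp only: of_nat_eq_iff)
    have Ae: "A $$ (?q m i, j) = A $$ (i, ?q m j)"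
      by (rule rc_eq[OF A qlt j i qlt e])
    have "cw n s (int (?q m i) - int i) * A $$ (?q m i, j) = A $$ (i, ?q m j) * cw n s (int (?q m j) - int j)"
      unfolding c1 c2 Ae by (rule mult.commute)
    then show "(\<lambda>k. cw n s (int k - int i) * A $$ (k,j)) (?q m i) = (\<lambda>k. A $$ (i,k) * cw n s (int k - int j)) (?q m j)"
      .
  qed simp
  also have "\<dots> = (\<Sum>k<n. A $$ (i,k) * cw n s (int k - int j))"
    by (rule sum_shift[OF n])
  also have "\<dots> = (A * transpose_mat (sigma_mat n s)) $$ (i,j)"
    using i j Ac by (simp add: scalar_prod_def sigma_entry lessThan_atLeast0)
  finally show "(sigma_mat n s * A) $$ (i,j) = (A * transpose_mat (sigma_mat n s)) $$ (i,j)" .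
qed (use rc_carrier[OF A] in auto)

lemma smult_smult_mat: "a \<cdot>\<^sub>m (b \<cdot>\<^sub>m (X :: 'a::comm_ring_1 mat)) = (a * b) \<cdot>\<^sub>m X"
  by (rule eq_matI) (auto simp: mult.assoc)

lemma one_smult_mat': "(1::'a::comm_ring_1) \<cdot>\<^sub>m X = X"
  by (rule eq_matI) auto

lemma inv_comm:
  fixes A B :: "'a::comm_ring_1 mat"
  assumes A: "A \<in> carrier_mat n n" and B: "B \<in> carrier_mat n n" and AB: "A * B = 1\<^sub>m n"
  shows "B * A = 1\<^sub>m n"
proof -
  have d: "det A * det B = 1" using det_mult[OF A B] AB by simp
  have aA: "adj_mat A \<in> carrier_mat n n" "adj_mat A * A = det A \<cdot>\<^sub>m 1\<^sub>m n" using adj_mat[OF A] by auto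
  have "adj_mat A = adj_mat A * (A * B)" using AB aA by simp
  also have "\<dots> = (adj_mat A * A) * B" by (rule assoc_mult_mat[symmetric, OF aA(1) A B])
  also have "\<dots> = det A \<cdot>\<^sub>m B" using B by (simp add: aA(2) mult_smult_assoc_mat[of _ n n _ n])
  finally have adj: "adj_mat A = det A \<cdot>\<^sub>m B" .
  have "B * A = (det B * det A) \<cdot>\<^sub>m (B * A)" using d by (simp add: mult.commute one_smult_mat')
  also have "\<dots> = det B \<cdot>\<^sub>m ((det A \<cdot>\<^sub>m B) * A)"
    using A B by (simp add: mult_smult_assoc_mat[of _ n n _ n] smult_smult_mat)
  also have "\<dots> = det B \<cdot>\<^sub>m (det A \<cdot>\<^sub>m 1\<^sub>m n)" using aA(2) adj by simp
  also have "\<dots> = 1\<^sub>m n" using d by (simp add: smult_smult_mat mult.commute one_smult_mat')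
  finally show ?thesis .
qed

lemma neg_neg_mat: "- (- (X :: 'a::ab_group_add mat)) = X"
  by (rule eq_matI) auto

lemma transpose_inv:
  fixes B :: "'a::comm_ring_1 mat"
  assumes B: "B \<in> carrier_mat N N" and BB: "B * transpose_mat B = - 1\<^sub>m N"
  shows "transpose_mat B * B = - 1\<^sub>m N"
proof -
  have h: "B * (- transpose_mat B) = 1\<^sub>m N" using BB by (simp add: neg_neg_mat)
  have "(- transpose_mat B) * B = 1\<^sub>m N" by (rule inv_comm[OF B _ h]) (use B in auto)
  hence "- (- (transpose_mat B * B)) = - 1\<^sub>m N" by simp
  thus ?thesis by (simp only: neg_neg_mat)
qed

lemma sum_split2: "(\<Sum>j\<in>{0..<(N::nat)+N}. f j) = (\<Sum>j<N. f j) + (\<Sum>j<N. (f (N + j) :: 'a::comm_monoid_add))"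
proof -
  have "(\<Sum>j\<in>{0..<N+N}. f j) = (\<Sum>j\<in>{0..<N}. f j) + (\<Sum>j\<in>{N..<N+N}. f j)"
    using sum.atLeastLessThan_concat[of 0 N "N+N" f] by simp
  also have "(\<Sum>j\<in>{N..<N+N}. f j) = (\<Sum>j\<in>{0..<N}. f (j + N))"
    using sum.shift_bounds_nat_ivl[of f 0 N N] by simp
  finally show ?thesis by (simp add: lessThan_atLeast0 add.commute)
qed

lemma delta_sum: "j < (N::nat) \<Longrightarrow> (\<Sum>i<N. c i * (if i = j then 1 else 0)) = (c j :: 'a::comm_ring_1)"
proof -
  assume j: "j < N"
  have "(\<Sum>i<N. c i * (if i = j then 1 else 0)) = (\<Sum>i<N. if i = j then c i else 0)"
    by (rule sum.cong) auto
  also have "\<dots> = c j" using j by (simp add: sum.delta[OF finite_lessThan])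
  finally show ?thesis .
qed

lemma delta_sum': "j < (N::nat) \<Longrightarrow> (\<Sum>i<N. (if i = j then 1 else 0) * c i) = (c j :: 'a::comm_ring_1)"
  using delta_sum[of j N c] by (simp add: mult.commute)

context
  fixes B :: "'a::comm_ring_1 mat" and N :: nat
  assumes B: "B \<in> carrier_mat N N"
begin

definition xv :: "(nat \<Rightarrow> 'a) \<Rightarrow> 'a vec" where
  "xv c = vec (N + N) (\<lambda>j. if j < N then c j else (\<Sum>i<N. c i * B $$ (i, j - N)))"

lemma xv_carrier[simp]: "xv c \<in> carrier_vec (N + N)"
  unfolding xv_def by simp

lemma code_eq: "code_gen (hconcat (1\<^sub>m N) B) = range xv"
proof -
  have "vec (dim_col (hconcat (1\<^sub>m N) B)) (\<lambda>j. \<Sum>i<dim_row (hconcat (1\<^sub>m N) B). c i * hconcat (1\<^sub>m N) B $$ (i, j)) = xv c" for c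
  proof (rule eq_vecI)
    fix j assume "j < dim_vec (xv c)"
    hence j: "j < N + N" by (simp add: xv_def)
    show "vec (dim_col (hconcat (1\<^sub>m N) B)) (\<lambda>j. \<Sum>i<dim_row (hconcat (1\<^sub>m N) B). c i * hconcat (1\<^sub>m N) B $$ (i, j)) $ j = xv c $ j"
    proof (cases "j < N")
      case True
      have "(\<Sum>i<N. c i * hconcat (1\<^sub>m N) B $$ (i, j)) = (\<Sum>i<N. c i * (if i = j then 1 else 0))"
        by (rule sum.cong) (use True B j in \<open>auto simp: hconcat_def\<close>)
      thus ?thesis using True B j delta_sum[OF True] by (simp add: hconcat_def xv_def)
    next
      case False
      have "(\<Sum>i<N. c i * hconcat (1\<^sub>m N) B $$ (i, j)) = (\<Sum>i<N. c i * B $$ (i, j - N))"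
        by (rule sum.cong) (use False B j in \<open>auto simp: hconcat_def\<close>)
      thus ?thesis using False B j by (simp add: hconcat_def xv_def)
    qed
  qed (use B in \<open>auto simp: hconcat_def xv_def\<close>)
  thus ?thesis unfolding code_gen_def by auto
qed

lemma ipx: assumes x: "x \<in> carrier_vec (N + N)"
  shows "x \<bullet> xv d = (\<Sum>j<N. x $ j * d j) + (\<Sum>j<N. x $ (N + j) * (\<Sum>i<N. d i * B $$ (i, j)))"
proof -
  have "x \<bullet> xv d = (\<Sum>j\<in>{0..<N+N}. x $ j * xv d $ j)" unfolding scalar_prod_def by (simp add: xv_def)
  also have "\<dots> = (\<Sum>j<N. x $ j * xv d $ j) + (\<Sum>j<N. x $ (N + j) * xv d $ (N + j))"
    by (rule sum_split2)
  also have "(\<Sum>j<N. x $ j * xv d $ j) = (\<Sum>j<N. x $ j * d j)"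
    by (rule sum.cong) (auto simp: xv_def)
  also have "(\<Sum>j<N. x $ (N + j) * xv d $ (N + j)) = (\<Sum>j<N. x $ (N + j) * (\<Sum>i<N. d i * B $$ (i, j)))"
    by (rule sum.cong) (auto simp: xv_def)
  finally show ?thesis .
qed

lemma GG: "i < N \<Longrightarrow> k < N \<Longrightarrow> (B * transpose_mat B) $$ (i,k) = (\<Sum>j<N. B $$ (i,j) * B $$ (k,j))"
  using B by (simp add: scalar_prod_def lessThan_atLeast0)

lemma GG': "i < N \<Longrightarrow> k < N \<Longrightarrow> (transpose_mat B * B) $$ (i,k) = (\<Sum>j<N. B $$ (j,i) * B $$ (j,k))"
  using B by (simp add: scalar_prod_def lessThan_atLeast0)

end

context fixes B :: "'a::comm_ring_1 mat" and N :: nat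
  assumes B: "B \<in> carrier_mat N N"
begin
lemma ipxx: "xv B N c \<bullet> xv B N d = (\<Sum>i<N. \<Sum>k<N. c i * d k * ((1\<^sub>m N + B * transpose_mat B) $$ (i,k)))"
proof -
  have "xv B N c \<bullet> xv B N d = (\<Sum>j<N. c j * d j) + (\<Sum>j<N. (\<Sum>i<N. c i * B $$ (i, j)) * (\<Sum>k<N. d k * B $$ (k, j)))"
    unfolding ipx[OF B xv_carrier[OF B]] by (intro arg_cong2[where f="(+)"] sum.cong) (auto simp: xv_def[OF B])
  also have "(\<Sum>j<N. c j * d j) = (\<Sum>i<N. \<Sum>k<N. c i * d k * (if i = k then 1 else 0))"
  proof (rule sum.cong)
    fix i assume i: "i \<in> {..<N}"
    have "(\<Sum>k<N. c i * d k * (if i = k then 1 else 0)) = (\<Sum>k<N. (if k = i then c i * d k else 0))"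
      by (rule sum.cong) auto
    thus "c i * d i = (\<Sum>k<N. c i * d k * (if i = k then 1 else 0))" using i by simp
  qed simp
  also have "(\<Sum>j<N. (\<Sum>i<N. c i * B $$ (i, j)) * (\<Sum>k<N. d k * B $$ (k, j)))
      = (\<Sum>j<N. \<Sum>i<N. \<Sum>k<N. c i * d k * (B $$ (i, j) * B $$ (k, j)))"
    unfolding sum_product by (intro sum.cong refl) (simp add: ac_simps)
  also have "\<dots> = (\<Sum>i<N. \<Sum>k<N. \<Sum>j<N. c i * d k * (B $$ (i, j) * B $$ (k, j)))"
    by (subst sum.swap) (rule sum.cong[OF refl], rule sum.swap)
  also have "\<dots> = (\<Sum>i<N. \<Sum>k<N. c i * d k * (B * transpose_mat B) $$ (i,k))"
    by (intro sum.cong refl) (simp add: GG[OF B] sum_distrib_left)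
  also have "(\<Sum>i<N. \<Sum>k<N. c i * d k * (if i = k then 1 else 0)) + \<dots>
     = (\<Sum>i<N. \<Sum>k<N. c i * d k * ((1\<^sub>m N + B * transpose_mat B) $$ (i,k)))"
    by (simp only: sum.distrib[symmetric]) (intro sum.cong refl, use B in \<open>simp add: distrib_left\<close>)
  finally show ?thesis .
qed

end

lemma delta2: assumes "a < (N::nat)" "b < N"
  shows "(\<Sum>i<N. \<Sum>k<N. (if i = a then 1 else 0) * (if k = b then 1 else 0) * X i k) = (X a b :: 'a::comm_ring_1)"
proof -
  have "(\<Sum>i<N. \<Sum>k<N. (if i = a then 1 else 0) * (if k = b then 1 else 0) * X i k) = (\<Sum>i<N. if i = a then X i b else 0)"
  proof (rule sum.cong[OF refl])
    fix i assume i: "i \<in> {..<N}"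
    have "(\<Sum>k<N. (if i = a then 1 else 0) * (if k = b then 1 else 0) * X i k) = (\<Sum>k<N. if k = b then (if i = a then X i k else 0) else 0)"
      by (rule sum.cong) auto
    also have "\<dots> = (if i = a then X i b else 0)" using assms by (simp add: sum.delta[OF finite_lessThan])
    finally show "(\<Sum>k<N. (if i = a then 1 else 0) * (if k = b then 1 else 0) * X i k) = (if i = a then X i b else 0)" .
  qed
  also have "\<dots> = X a b" using assms by (simp add: sum.delta[OF finite_lessThan])
  finally show ?thesis .
qed

lemma sd_iff: fixes B :: "'a::comm_ring_1 mat" assumes B: "B \<in> carrier_mat N N"
  shows "self_dual (N + N) (code_gen (hconcat (1\<^sub>m N) B)) \<longleftrightarrow> B * transpose_mat B = - 1\<^sub>m N"
proof
  let ?C = "range (xv B N)"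
  let ?d = "\<lambda>a i. if i = a then (1::'a) else 0"
  assume sd: "self_dual (N + N) (code_gen (hconcat (1\<^sub>m N) B))"
  hence sd': "?C = dual_code (N + N) ?C" unfolding self_dual_def code_eq[OF B] by simp
  show "B * transpose_mat B = - 1\<^sub>m N"
  proof (rule eq_matI)
    fix a b assume "a < dim_row (- 1\<^sub>m N)" "b < dim_col (- 1\<^sub>m N :: 'a mat)"
    hence a: "a < N" and b: "b < N" by auto
    have "xv B N (?d a) \<in> dual_code (N + N) ?C" using sd' by blast
    hence "xv B N (?d a) \<bullet> xv B N (?d b) = 0" unfolding dual_code_def by blast
    hence "(1\<^sub>m N + B * transpose_mat B) $$ (a, b) = 0"
      unfolding ipxx[OF B] delta2[OF a b] .
    thus "(B * transpose_mat B) $$ (a, b) = (- 1\<^sub>m N) $$ (a, b)" using a b B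
      by (simp add: eq_neg_iff_add_eq_0 add.commute)
  qed (use B in auto)
next
  let ?C = "range (xv B N)"
  let ?d = "\<lambda>a i. if i = a then (1::'a) else 0"
  assume G: "B * transpose_mat B = - 1\<^sub>m N"
  have G': "transpose_mat B * B = - 1\<^sub>m N" by (rule transpose_inv[OF B G])
  have orth: "xv B N c \<bullet> xv B N d = 0" for c d
  proof -
    have "(1\<^sub>m N + B * transpose_mat B) $$ (i, k) = 0" if "i < N" "k < N" for i k
      using that B G by simp
    thus ?thesis unfolding ipxx[OF B] by (simp add: sum.neutral)
  qed
  have sub1: "?C \<subseteq> dual_code (N + N) ?C"
    unfolding dual_code_def using orth xv_carrier[OF B] by blast
  have sub2: "dual_code (N + N) ?C \<subseteq> ?C"
  proof
    fix x assume "x \<in> dual_code (N + N) ?C"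
    hence x: "x \<in> carrier_vec (N + N)" and xo: "\<And>y. y \<in> ?C \<Longrightarrow> x \<bullet> y = 0"
      unfolding dual_code_def by auto
    have xa: "x $ a = - (\<Sum>l<N. x $ (N + l) * B $$ (a, l))" if a: "a < N" for a
    proof -
      have "x \<bullet> xv B N (?d a) = 0" using xo by blast
      moreover have "(\<Sum>j<N. x $ j * ?d a j) = x $ a" using a
        by (simp add: if_distrib[of "(*) _"] sum.delta'[OF finite_lessThan] cong: if_cong)
      moreover have "(\<Sum>i<N. ?d a i * B $$ (i, j)) = B $$ (a, j)" for j
        using a delta_sum'[OF a, of "\<lambda>i. B $$ (i, j)"] by simp
      ultimately have "x $ a + (\<Sum>l<N. x $ (N + l) * B $$ (a, l)) = 0"
        unfolding ipx[OF B x] by simp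
      thus ?thesis by (simp add: eq_neg_iff_add_eq_0)
    qed
    have xb: "(\<Sum>i<N. x $ i * B $$ (i, j)) = x $ (N + j)" if j: "j < N" for j
    proof -
      have "(\<Sum>i<N. x $ i * B $$ (i, j)) = (\<Sum>i<N. - (\<Sum>l<N. x $ (N + l) * B $$ (i, l)) * B $$ (i, j))"
        by (rule sum.cong) (auto simp: xa)
      also have "\<dots> = (\<Sum>i<N. - (\<Sum>l<N. x $ (N + l) * (B $$ (i, l) * B $$ (i, j))))"
        by (intro sum.cong refl) (simp add: sum_distrib_right mult.assoc)
      also have "\<dots> = - (\<Sum>i<N. \<Sum>l<N. x $ (N + l) * (B $$ (i, l) * B $$ (i, j)))"
        by (rule sum_negf)
      also have "\<dots> = - (\<Sum>l<N. \<Sum>i<N. x $ (N + l) * (B $$ (i, l) * B $$ (i, j)))"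
        by (subst sum.swap) (rule refl)
      also have "\<dots> = - (\<Sum>l<N. x $ (N + l) * (transpose_mat B * B) $$ (l, j))"
        by (intro arg_cong[where f=uminus] sum.cong refl) (simp add: GG'[OF B] j sum_distrib_left)
      also have "\<dots> = - (\<Sum>l<N. x $ (N + l) * - (if l = j then 1 else 0))"
        by (intro arg_cong[where f=uminus] sum.cong refl) (use j B in \<open>simp add: G'\<close>)
      also have "\<dots> = (\<Sum>l<N. (if l = j then 1 else 0) * x $ (N + l))"
        by (simp add: sum_negf[symmetric] mult.commute)
      also have "\<dots> = x $ (N + j)" by (rule delta_sum'[OF j])
      finally show ?thesis .
    qed
    have "x = xv B N (\<lambda>i. x $ i)"
    proof (rule eq_vecI)
      fix t assume "t < dim_vec (xv B N (\<lambda>i. x $ i))"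
      hence t: "t < N + N" by (simp add: xv_def[OF B])
      show "x $ t = xv B N (\<lambda>i. x $ i) $ t"
      proof (cases "t < N")
        case True thus ?thesis using t by (simp add: xv_def[OF B])
      next
        case False
        hence "t - N < N" using t by simp
        from xb[OF this] False t show ?thesis by (simp add: xv_def[OF B])
      qed
    qed (use x in \<open>auto simp: xv_def[OF B]\<close>)
    thus "x \<in> ?C" by blast
  qed
  show "self_dual (N + N) (code_gen (hconcat (1\<^sub>m N) B))"
    unfolding self_dual_def code_eq[OF B] using sub1 sub2 xv_carrier[OF B] by blast
qed

lemma four_block_eq:
  assumes c: "X \<in> carrier_mat n n" "Y \<in> carrier_mat n n" "Z \<in> carrier_mat n n" "W \<in> carrier_mat n n"
    "X' \<in> carrier_mat n n" "Y' \<in> carrier_mat n n" "Z' \<in> carrier_mat n n" "W' \<in> carrier_mat n n"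
  shows "four_block_mat X Y Z W = four_block_mat X' Y' Z' W' \<longleftrightarrow> X = X' \<and> Y = Y' \<and> Z = Z' \<and> W = W'"
proof
  assume e: "four_block_mat X Y Z W = four_block_mat X' Y' Z' W'"
  have h: "four_block_mat X Y Z W $$ (i,j) = four_block_mat X' Y' Z' W' $$ (i,j)" for i j using e by simp
  have "X = X'"
  proof (rule eq_matI)
    fix i j assume "i < dim_row X'" "j < dim_col X'"
    thus "X $$ (i,j) = X' $$ (i,j)" using h[of i j] c by simp
  qed (use c in auto)
  moreover have "Y = Y'"
  proof (rule eq_matI)
    fix i j assume "i < dim_row Y'" "j < dim_col Y'"
    thus "Y $$ (i,j) = Y' $$ (i,j)" using h[of i "j + n"] c by simp
  qed (use c in auto)
  moreover have "Z = Z'"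
  proof (rule eq_matI)
    fix i j assume "i < dim_row Z'" "j < dim_col Z'"
    thus "Z $$ (i,j) = Z' $$ (i,j)" using h[of "i + n" j] c by simp
  qed (use c in auto)
  moreover have "W = W'"
  proof (rule eq_matI)
    fix i j assume "i < dim_row W'" "j < dim_col W'"
    thus "W $$ (i,j) = W' $$ (i,j)" using h[of "i + n" "j + n"] c by simp
  qed (use c in auto)
  ultimately show "X = X' \<and> Y = Y' \<and> Z = Z' \<and> W = W'" by blast
qed auto

lemma minus_one_block: "- 1\<^sub>m (n + n) = (four_block_mat (- 1\<^sub>m n) (0\<^sub>m n n) (0\<^sub>m n n) (- 1\<^sub>m n) :: 'a::ring_1 mat)"
  by (rule eq_matI) auto

lemma ring_fact:
  fixes s11 s12 s21 s22 x1 x2 a2 d :: "'a::comm_ring_1"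
  assumes c: "(2::'a) = 0"
  shows "(s11 + ((s22 + x2) + (x2 + a2)) = - d \<and> (s12 + x1) + (s21 + x1) = 0 \<and> (s21 + x1) + (s12 + x1) = 0 \<and> ((s22 + x2) + (x2 + a2)) + s11 = - d)
     \<longleftrightarrow> (((s11 + s12) + (s21 + s22)) + a2 = d \<and> s12 = s21)"
proof -
  have xx: "y + y = 0" for y :: 'a using c by (metis mult_2 mult_zero_left)
  have neg: "- y = y" for y :: 'a using xx by (metis neg_eq_iff_add_eq_0)
  have eq: "(a + b = 0) = (a = b)" for a b :: 'a using neg by (metis eq_neg_iff_add_eq_0)
  have 1: "s11 + ((s22 + x2) + (x2 + a2)) = (s11 + s22 + a2) + (x2 + x2)" by (simp add: algebra_simps)
  have 2: "((s22 + x2) + (x2 + a2)) + s11 = (s11 + s22 + a2) + (x2 + x2)" by (simp add: algebra_simps)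
  have 3: "(s12 + x1) + (s21 + x1) = (s12 + s21) + (x1 + x1)" by (simp add: algebra_simps)
  have 4: "(s21 + x1) + (s12 + x1) = (s12 + s21) + (x1 + x1)" by (simp add: algebra_simps)
  have 5: "((s11 + s12) + (s21 + s22)) + a2 = (s11 + s22 + a2) + (s12 + s21)" by (simp add: algebra_simps)
  show ?thesis unfolding 1 2 3 4 5 xx neg add_0_right
    using eq[of s12 s21] xx[of s21] by auto
qed

lemma mat_entries_eq: "X \<in> carrier_mat n n \<Longrightarrow> Y \<in> carrier_mat n n \<Longrightarrow> X = Y \<longleftrightarrow> (\<forall>i<n. \<forall>j<n. X $$ (i,j) = Y $$ (i,j))"
  by (auto intro!: eq_matI)

lemma mat_entries_eq':
  assumes "X \<in> carrier_mat n n" "Y \<in> carrier_mat n n"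
    "\<And>i j. i < n \<Longrightarrow> j < n \<Longrightarrow> X $$ (i,j) = f i j" "\<And>i j. i < n \<Longrightarrow> j < n \<Longrightarrow> Y $$ (i,j) = g i j"
  shows "X = Y \<longleftrightarrow> (\<forall>i<n. \<forall>j<n. f i j = g i j)"
  using mat_entries_eq[OF assms(1,2)] assms(3,4) by auto

lemma block_char:
  fixes S11 S12 S21 S22 X1 X2 A2 :: "'a::comm_ring_1 mat"
  assumes c2: "(2::'a) = 0"
    and c: "S11 \<in> carrier_mat n n" "S12 \<in> carrier_mat n n" "S21 \<in> carrier_mat n n" "S22 \<in> carrier_mat n n"
      "X1 \<in> carrier_mat n n" "X2 \<in> carrier_mat n n" "A2 \<in> carrier_mat n n"
  shows "(S11 + ((S22 + X2) + (X2 + A2)) = - 1\<^sub>m n \<and> (S12 + X1) + (S21 + X1) = 0\<^sub>m n n \<and>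
          (S21 + X1) + (S12 + X1) = 0\<^sub>m n n \<and> ((S22 + X2) + (X2 + A2)) + S11 = - 1\<^sub>m n)
     \<longleftrightarrow> (((S11 + S12) + (S21 + S22)) + A2 = 1\<^sub>m n \<and> S12 = S21)"
proof -
  let ?s11 = "\<lambda>i j. S11 $$ (i,j)" let ?s12 = "\<lambda>i j. S12 $$ (i,j)" let ?s21 = "\<lambda>i j. S21 $$ (i,j)"
  let ?s22 = "\<lambda>i j. S22 $$ (i,j)" let ?x1 = "\<lambda>i j. X1 $$ (i,j)" let ?x2 = "\<lambda>i j. X2 $$ (i,j)"
  let ?a2 = "\<lambda>i j. A2 $$ (i,j)" let ?d = "\<lambda>i j. (1\<^sub>m n :: 'a mat) $$ (i,j)"
  have l1: "(S11 + ((S22 + X2) + (X2 + A2)) = - 1\<^sub>m n) \<longleftrightarrow> (\<forall>i<n. \<forall>j<n. ?s11 i j + ((?s22 i j + ?x2 i j) + (?x2 i j + ?a2 i j)) = - ?d i j)"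
    by (rule mat_entries_eq') (use c in simp_all)
  have l2: "((S12 + X1) + (S21 + X1) = 0\<^sub>m n n) \<longleftrightarrow> (\<forall>i<n. \<forall>j<n. (?s12 i j + ?x1 i j) + (?s21 i j + ?x1 i j) = 0)"
    by (rule mat_entries_eq') (use c in simp_all)
  have l3: "((S21 + X1) + (S12 + X1) = 0\<^sub>m n n) \<longleftrightarrow> (\<forall>i<n. \<forall>j<n. (?s21 i j + ?x1 i j) + (?s12 i j + ?x1 i j) = 0)"
    by (rule mat_entries_eq') (use c in simp_all)
  have l4: "(((S22 + X2) + (X2 + A2)) + S11 = - 1\<^sub>m n) \<longleftrightarrow> (\<forall>i<n. \<forall>j<n. ((?s22 i j + ?x2 i j) + (?x2 i j + ?a2 i j)) + ?s11 i j = - ?d i j)"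
    by (rule mat_entries_eq') (use c in simp_all)
  have r1: "(((S11 + S12) + (S21 + S22)) + A2 = 1\<^sub>m n) \<longleftrightarrow> (\<forall>i<n. \<forall>j<n. ((?s11 i j + ?s12 i j) + (?s21 i j + ?s22 i j)) + ?a2 i j = ?d i j)"
    by (rule mat_entries_eq') (use c in simp_all)
  have r2: "(S12 = S21) \<longleftrightarrow> (\<forall>i<n. \<forall>j<n. ?s12 i j = ?s21 i j)"
    by (rule mat_entries_eq[OF c(2,3)])
  have rf: "\<And>i j. (?s11 i j + ((?s22 i j + ?x2 i j) + (?x2 i j + ?a2 i j)) = - ?d i j \<and>
      (?s12 i j + ?x1 i j) + (?s21 i j + ?x1 i j) = 0 \<and>
      (?s21 i j + ?x1 i j) + (?s12 i j + ?x1 i j) = 0 \<and>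
      ((?s22 i j + ?x2 i j) + (?x2 i j + ?a2 i j)) + ?s11 i j = - ?d i j)
     \<longleftrightarrow> (((?s11 i j + ?s12 i j) + (?s21 i j + ?s22 i j)) + ?a2 i j = ?d i j \<and> ?s12 i j = ?s21 i j)"
    by (rule ring_fact[OF c2])
  have "(S11 + ((S22 + X2) + (X2 + A2)) = - 1\<^sub>m n \<and> (S12 + X1) + (S21 + X1) = 0\<^sub>m n n \<and>
          (S21 + X1) + (S12 + X1) = 0\<^sub>m n n \<and> ((S22 + X2) + (X2 + A2)) + S11 = - 1\<^sub>m n)
     \<longleftrightarrow> (\<forall>i<n. \<forall>j<n. (?s11 i j + ((?s22 i j + ?x2 i j) + (?x2 i j + ?a2 i j)) = - ?d i j \<and>
      (?s12 i j + ?x1 i j) + (?s21 i j + ?x1 i j) = 0 \<and>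
      (?s21 i j + ?x1 i j) + (?s12 i j + ?x1 i j) = 0 \<and>
      ((?s22 i j + ?x2 i j) + (?x2 i j + ?a2 i j)) + ?s11 i j = - ?d i j))"
    unfolding l1 l2 l3 l4 by blast
  also have "\<dots> \<longleftrightarrow> (\<forall>i<n. \<forall>j<n. (((?s11 i j + ?s12 i j) + (?s21 i j + ?s22 i j)) + ?a2 i j = ?d i j \<and> ?s12 i j = ?s21 i j))"
    by (simp only: rf)
  also have "\<dots> \<longleftrightarrow> (((S11 + S12) + (S21 + S22)) + A2 = 1\<^sub>m n \<and> S12 = S21)"
    unfolding r1 r2 by blast
  finally show ?thesis .
qed

lemma gr_mult_carrier: "gr_mult n u v \<in> carrier_vec n"
  unfolding gr_mult_def by simp

theorem mainTheorem7:
  fixes n :: nat and v1 v2 :: "'a::{comm_ring_1, finite} vec" and A :: "'a mat"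
  assumes frob: "frobenius_ring TYPE('a)"
    and char2: "(2::'a) = 0"
    and n_pos: "n \<ge> 1"
    and v1: "v1 \<in> carrier_vec n" and v2: "v2 \<in> carrier_vec n"
    and neq: "v1 \<noteq> v2"
    and A: "reverse_circulant n A"
  shows "self_dual (4 * n) (code_gen (M_sigma n v1 v2 A)) \<longleftrightarrow>
    (sigma_mat n (gr_mult n (v1 + v2) (gr_star n (v1 + v2))) + A * A = 1\<^sub>m n \<and>
     gr_mult n v1 (gr_star n v2) = gr_mult n v2 (gr_star n v1))"
proof -
  have n: "n > 0" using n_pos by simp
  define S1 where "S1 = sigma_mat n v1"
  define S2 where "S2 = sigma_mat n v2"
  define St1 where "St1 = transpose_mat S1"
  define St2 where "St2 = transpose_mat S2"
  define T where "T = S2 + A"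
  define Tt where "Tt = St2 + A"
  define Bm where "Bm = four_block_mat S1 T T S1"
  have Ac: "A \<in> carrier_mat n n" using A by (rule rc_carrier)
  have c1: "S1 \<in> carrier_mat n n" and c2: "S2 \<in> carrier_mat n n" unfolding S1_def S2_def by simp_all
  have ct1: "St1 \<in> carrier_mat n n" and ct2: "St2 \<in> carrier_mat n n" unfolding St1_def St2_def using c1 c2 by simp_all
  have cT: "T \<in> carrier_mat n n" and cTt: "Tt \<in> carrier_mat n n" unfolding T_def Tt_def using c2 ct2 Ac by simp_all
  have TtT: "transpose_mat T = Tt" unfolding T_def Tt_def St2_def using transpose_add[OF c2 Ac] rc_sym[OF A] by simp
  have cB: "Bm \<in> carrier_mat (n + n) (n + n)" unfolding Bm_def using c1 cT by simp
  have hM: "M_sigma n v1 v2 A = hconcat (1\<^sub>m (n + n)) Bm"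
    unfolding M_sigma_def Bm_def T_def S1_def S2_def by (simp add: mult_2)
  have h4: "4 * n = (n + n) + (n + n)" by simp
  have sd: "self_dual (4 * n) (code_gen (M_sigma n v1 v2 A)) \<longleftrightarrow> Bm * transpose_mat Bm = - 1\<^sub>m (n + n)"
    unfolding hM h4 by (rule sd_iff[OF cB])
  have BmT: "transpose_mat Bm = four_block_mat St1 Tt Tt St1"
    unfolding Bm_def St1_def using transpose_four_block_mat[OF c1 cT cT c1] TtT by simp
  have prod: "Bm * transpose_mat Bm = four_block_mat (S1 * St1 + T * Tt) (S1 * Tt + T * St1) (T * St1 + S1 * Tt) (T * Tt + S1 * St1)"
    unfolding BmT unfolding Bm_def by (rule mult_four_block_mat[OF c1 cT cT c1 ct1 cTt cTt ct1])
  have blk: "Bm * transpose_mat Bm = - 1\<^sub>m (n + n) \<longleftrightarrow>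
     (S1 * St1 + T * Tt = - 1\<^sub>m n \<and> S1 * Tt + T * St1 = 0\<^sub>m n n \<and> T * St1 + S1 * Tt = 0\<^sub>m n n \<and> T * Tt + S1 * St1 = - 1\<^sub>m n)"
    unfolding prod minus_one_block
    by (rule four_block_eq) (use c1 ct1 cT cTt in auto)
  have comm1: "A * St1 = S1 * A" unfolding St1_def S1_def using sigma_rc_comm[OF n A, of v1] by simp
  have comm2: "A * St2 = S2 * A" unfolding St2_def S2_def using sigma_rc_comm[OF n A, of v2] by simp
  have eTT: "T * Tt = (S2 * St2 + S2 * A) + (S2 * A + A * A)"
    unfolding T_def Tt_def
    using add_mult_distrib_mat[OF c2 Ac cTt[unfolded Tt_def]] mult_add_distrib_mat[OF c2 ct2 Ac]
      mult_add_distrib_mat[OF Ac ct2 Ac] comm2 by simp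
  have eS1Tt: "S1 * Tt = S1 * St2 + S1 * A" unfolding Tt_def by (rule mult_add_distrib_mat[OF c1 ct2 Ac])
  have eTSt1: "T * St1 = S2 * St1 + S1 * A" unfolding T_def
    using add_mult_distrib_mat[OF c2 Ac ct1] comm1 by simp
  have tgt1: "sigma_mat n (gr_mult n (v1 + v2) (gr_star n (v1 + v2))) = (S1 * St1 + S1 * St2) + (S2 * St1 + S2 * St2)"
  proof -
    have "sigma_mat n (gr_mult n (v1 + v2) (gr_star n (v1 + v2))) = (S1 + S2) * (St1 + St2)"
      unfolding sigma_mult[OF n] sigma_star[OF n] sigma_add[OF v1 v2] S1_def S2_def St1_def St2_def
      using transpose_add[OF c2[unfolded S2_def] c2[unfolded S2_def]] transpose_add[of "sigma_mat n v1" n n "sigma_mat n v2"]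
      by simp
    also have "\<dots> = S1 * (St1 + St2) + S2 * (St1 + St2)" by (rule add_mult_distrib_mat[OF c1 c2 add_carrier_mat[OF ct2, of St1]])
    also have "\<dots> = (S1 * St1 + S1 * St2) + (S2 * St1 + S2 * St2)"
      using mult_add_distrib_mat[OF c1 ct1 ct2] mult_add_distrib_mat[OF c2 ct1 ct2] by simp
    finally show ?thesis .
  qed
  have sig12: "sigma_mat n (gr_mult n v1 (gr_star n v2)) = S1 * St2"
    unfolding sigma_mult[OF n] sigma_star[OF n] S1_def St2_def S2_def ..
  have sig21: "sigma_mat n (gr_mult n v2 (gr_star n v1)) = S2 * St1"
    unfolding sigma_mult[OF n] sigma_star[OF n] S2_def St1_def S1_def ..
  have tgt2: "gr_mult n v1 (gr_star n v2) = gr_mult n v2 (gr_star n v1) \<longleftrightarrow> S1 * St2 = S2 * St1"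
  proof
    assume "gr_mult n v1 (gr_star n v2) = gr_mult n v2 (gr_star n v1)"
    thus "S1 * St2 = S2 * St1" using sig12 sig21 by metis
  next
    assume "S1 * St2 = S2 * St1"
    thus "gr_mult n v1 (gr_star n v2) = gr_mult n v2 (gr_star n v1)"
      using sigma_inj[OF n gr_mult_carrier gr_mult_carrier] sig12 sig21 by metis
  qed
  have bc: "(S1 * St1 + ((S2 * St2 + S2 * A) + (S2 * A + A * A)) = - 1\<^sub>m n \<and> (S1 * St2 + S1 * A) + (S2 * St1 + S1 * A) = 0\<^sub>m n n \<and>
          (S2 * St1 + S1 * A) + (S1 * St2 + S1 * A) = 0\<^sub>m n n \<and> ((S2 * St2 + S2 * A) + (S2 * A + A * A)) + S1 * St1 = - 1\<^sub>m n)
     \<longleftrightarrow> (((S1 * St1 + S1 * St2) + (S2 * St1 + S2 * St2)) + A * A = 1\<^sub>m n \<and> S1 * St2 = S2 * St1)"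
    by (rule block_char[OF char2]) (use c1 c2 ct1 ct2 Ac in auto)
  show ?thesis
    unfolding sd blk eTT eS1Tt eTSt1 tgt1 tgt2 bc ..
qed

end
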